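(* Let $\beta>0$ be fixed. For $0<a<s$ define the (extended) Erlang C function $$C(s,a)=\left(\int_0^\infty (1+t)^s\,\frac{a t}{1+t}\,e^{-a t}\,dt\right)^{-1},$$ and let $C_*(\beta)=\left(1+\beta\,\frac{\Phi(\beta)}{\phi(\beta)}\right)^{-1}$, where $\Phi$ and $\phi$ are the distribution function and density of a standard normal random variable. Then the function $a\mapsto C(a+\beta\sqrt{a},a)$ is strictly decreasing on $(0,\infty)$. In particular, $C(a+\beta\sqrt{a},a)>C_*(\beta)$ for every $a>0$.
   Context: Note that $a<a+\beta\sqrt a$ for $a>0,\beta>0$, so $C(a+\beta\sqrt a,a)$ is well defined. It is a known result (Halfin–Whitt) that $\lim_{a\to\infty}C(a+\beta\sqrt{a},a)=C_*(\beta)$; this may be used. *)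

theory Defs
  imports "HOL-Probability.Probability"
begin

definition erlangC :: "real \<Rightarrow> real \<Rightarrow> real" where
  "erlangC s a = inverse (LBINT t:{0<..}. (1 + t) powr s * (a * t / (1 + t)) * exp (- a * t))"

definition std_normal_cdf :: "real \<Rightarrow> real" where
  "std_normal_cdf x = (LBINT y:{..x}. std_normal_density y)"

definition C_star :: "real \<Rightarrow> real" where
  "C_star \<beta> = inverse (1 + \<beta> * std_normal_cdf \<beta> / std_normal_density \<beta>)"

end

theory Submission imports Defs "HOL-Real_Asymp.Real_Asymp" begin


lemma gauss_integrable: "integrable lborel (\<lambda>z::real. exp (c*z - z^2/2))"
proof -
  have "integrable lborel (\<lambda>z. (exp (c^2/2) * sqrt (2*pi)) * normal_density c 1 z)"
    by (intro integrable_mult_right integrable_normal_density) auto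
  moreover have "(exp (c^2/2) * sqrt (2*pi)) * normal_density c 1 z = exp (c*z - z^2/2)" for z
  proof -
    have "exp (c^2/2) * exp (-(z - c)\<^sup>2 / 2) = exp (c*z - z^2/2)"
      by (simp add: exp_add[symmetric] power2_eq_square algebra_simps diff_divide_distrib add_divide_distrib)
    then show ?thesis by (simp add: normal_density_def)
  qed
  ultimately show ?thesis by simp
qed

lemma gauss_set_integrable: "set_integrable lborel A (\<lambda>z::real. exp (c*z - z^2/2))" if "A \<in> sets lborel"
  unfolding set_integrable_def using that by (intro integrable_mult_indicator gauss_integrable)

lemma cdf_eq: "std_normal_cdf b = std_normal_density b * (LBINT z:{0<..}. exp (b*z - z^2/2))"
proof -
  have "std_normal_cdf b = (\<integral>y. indicator {..b} y *\<^sub>R std_normal_density y \<partial>lborel)"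
    by (simp add: std_normal_cdf_def set_lebesgue_integral_def)
  also have "\<dots> = \<bar>-1\<bar> *\<^sub>R (\<integral>z. indicator {..b} (b + -1 * z) *\<^sub>R std_normal_density (b + -1*z) \<partial>lborel)"
    by (rule lborel_integral_real_affine) simp
  also have "\<dots> = (\<integral>z. indicator {..b} (b - z) * std_normal_density (b - z) \<partial>lborel)"
    by simp
  also have "\<dots> = (\<integral>z. std_normal_density b * (indicator {0<..} z * exp (b*z - z^2/2)) \<partial>lborel)"
  proof (rule integral_cong_AE)
    show "AE z in lborel. indicator {..b} (b - z) * std_normal_density (b - z) = std_normal_density b * (indicator {0<..} z * exp (b * z - z\<^sup>2 / 2))"
      using AE_lborel_singleton[of 0]
    proof eventually_elim
      case (elim z)
      have "exp (- (b - z)\<^sup>2 / 2) = exp (- b\<^sup>2 / 2) * exp (b * z - z\<^sup>2 / 2)"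
        by (simp add: exp_add[symmetric] power2_eq_square algebra_simps diff_divide_distrib add_divide_distrib)
      then show ?case using elim by (auto simp: indicator_def std_normal_density_def)
    qed
  qed auto
  also have "\<dots> = std_normal_density b * (LBINT z:{0<..}. exp (b*z - z^2/2))"
    by (simp add: set_lebesgue_integral_def)
  finally show ?thesis .
qed



lemma r_pos: "(w::real) > 0 \<Longrightarrow> (w - 1) * exp w + 1 > 0"
proof -
  assume w: "w > 0"
  have "(\<lambda>w. (w - 1) * exp w + 1) 0 < (\<lambda>w. (w - 1) * exp w + 1) w"
  proof (rule DERIV_pos_imp_increasing_open[OF w])
    fix x :: real assume x: "0 < x" "x < w"
    have "DERIV (\<lambda>w. (w - 1) * exp w + 1) x :> (1 * exp x + (x - 1) * exp x + 0)"
      by (auto intro!: derivative_eq_intros)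
    moreover have "1 * exp x + (x - 1) * exp x + 0 > 0" using x by (simp add: algebra_simps)
    ultimately show "\<exists>y. DERIV (\<lambda>w. (w - 1) * exp w + 1) x :> y \<and> 0 < y" by blast
  qed (intro continuous_intros)
  then show ?thesis by simp
qed

lemma q_pos: "(w::real) > 0 \<Longrightarrow> (w - 2) * exp w + w + 2 > 0"
proof -
  assume w: "w > 0"
  have "(\<lambda>w. (w - 2) * exp w + w + 2) 0 < (\<lambda>w. (w - 2) * exp w + w + 2) w"
  proof (rule DERIV_pos_imp_increasing_open[OF w])
    fix x :: real assume x: "0 < x" "x < w"
    have "DERIV (\<lambda>w. (w - 2) * exp w + w + 2) x :> (1 * exp x + (x - 2) * exp x + 1 + 0)"
      by (auto intro!: derivative_eq_intros)
    moreover have "1 * exp x + (x - 2) * exp x + 1 + 0 > 0" using r_pos[OF x(1)] by (simp add: algebra_simps)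
    ultimately show "\<exists>y. DERIV (\<lambda>w. (w - 2) * exp w + w + 2) x :> y \<and> 0 < y" by blast
  qed (intro continuous_intros)
  then show ?thesis by simp
qed

definition phi :: "real \<Rightarrow> real" where "phi w = (exp w - 1 - w) / w^2"

lemma phi_mono: assumes "0 < v" "v < w" shows "phi v < phi w"
proof (rule DERIV_pos_imp_increasing[OF assms(2)])
  fix x assume x: "v \<le> x" "x \<le> w"
  then have x0: "x > 0" using assms by auto
  have "DERIV phi x :> ((exp x - 0 - 1) * x^2 - (exp x - 1 - x) * (of_nat 2 * x ^ (2 - 1) * 1)) / (x^2 * x^2)"
    unfolding phi_def[abs_def] using x0
    by (auto intro!: derivative_eq_intros)
  moreover have "((exp x - 0 - 1) * x^2 - (exp x - 1 - x) * (of_nat 2 * x ^ (2 - 1) * 1)) / (x^2 * x^2)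
     = ((x - 2) * exp x + x + 2) / x^3"
    using x0 by (simp add: field_simps power2_eq_square power3_eq_cube)
  moreover have "((x - 2) * exp x + x + 2) / x^3 > 0" using q_pos[OF x0] x0 by simp
  ultimately show "\<exists>y. DERIV phi x :> y \<and> 0 < y" by auto
qed

lemma exponent_mono:
  fixes a b z :: real
  assumes "0 < a" "a < b" "0 < z"
  shows "a * (1 + z / sqrt a - exp (z / sqrt a)) < b * (1 + z / sqrt b - exp (z / sqrt b))"
proof -
  have sa: "sqrt a > 0" "sqrt b > 0" using assms by auto
  have lt: "z / sqrt b < z / sqrt a"
    using assms sa by (intro divide_strict_left_mono) (auto simp: real_sqrt_less_iff)
  have "phi (z / sqrt b) < phi (z / sqrt a)" using lt assms sa by (intro phi_mono) auto
  then have "(- (z^2)) * phi (z / sqrt a) < (- (z^2)) * phi (z / sqrt b)" using assms by simp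
  moreover have "c * (1 + z / sqrt c - exp (z / sqrt c)) = (- (z^2)) * phi (z / sqrt c)" if "c > 0" for c
    using that assms by (simp add: phi_def field_simps power2_eq_square)
  ultimately show ?thesis using assms by simp
qed



context
  fixes a \<beta> :: real
  assumes a: "a > 0" and b: "\<beta> > 0"
begin

definition "hh z = exp (\<beta>*z + a*(1 + z/sqrt a - exp (z/sqrt a)))"

lemma sqa: "sqrt a > 0" "sqrt a * sqrt a = a" "sqrt a ^ 2 = a" using a by auto

lemma hh_bound: "z \<ge> 0 \<Longrightarrow> hh z \<le> exp (\<beta>*z - z^2/2)"
proof -
  assume z: "z \<ge> 0"
  have "1 + z/sqrt a + (z/sqrt a)^2/2 \<le> exp (z/sqrt a)"
    using z sqa by (intro exp_lower_Taylor_quadratic) auto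
  then have "a*(1 + z/sqrt a - exp (z/sqrt a)) \<le> a * (- ((z/sqrt a)^2) / 2)"
    using a by (intro mult_left_mono) auto
  also have "a * (- ((z/sqrt a)^2) / 2) = - (z^2)/2" using sqa by (simp add: power_divide)
  finally show ?thesis unfolding hh_def by simp
qed

lemma hh_pos: "hh z > 0" unfolding hh_def by simp

lemma hh_cont: "continuous_on S hh" unfolding hh_def by (intro continuous_intros) (use sqa in auto)

lemma hh_meas[measurable]: "hh \<in> borel_measurable borel"
  by (intro borel_measurable_continuous_onI hh_cont)

lemma hh_int: "set_integrable lborel {0<..} hh"
proof (rule set_integrable_bound[OF gauss_set_integrable[of "{0<..}" \<beta>]])
  show "set_borel_measurable lborel {0<..} hh" unfolding set_borel_measurable_def by measurable
  show "AE x in lborel. x \<in> {0<..} \<longrightarrow> norm (hh x) \<le> norm (exp (\<beta> * x - x\<^sup>2 / 2))"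
    using hh_bound less_imp_le[OF hh_pos] by auto
qed auto

definition "kk z = sqrt a * (exp (z/sqrt a) - 1) * hh z"

lemma kk_int: "set_integrable lborel {0<..} kk"
proof (rule set_integrable_bound[OF set_integrable_mult_right[OF gauss_set_integrable[of "{0<..}" "\<beta> + 1/sqrt a"]]])
  show "set_borel_measurable lborel {0<..} kk" unfolding set_borel_measurable_def kk_def by measurable
  show "AE x in lborel. x \<in> {0<..} \<longrightarrow> norm (kk x) \<le> norm (sqrt a * exp ((\<beta> + 1/sqrt a) * x - x\<^sup>2 / 2))"
  proof (intro AE_I2 impI)
    fix z :: real assume z: "z \<in> {0<..}"
    have "0 \<le> sqrt a * (exp (z/sqrt a) - 1) * hh z"
      using z sqa less_imp_le[OF hh_pos] by (intro mult_nonneg_nonneg) auto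
    moreover have "sqrt a * (exp (z/sqrt a) - 1) * hh z \<le> sqrt a * exp (z/sqrt a) * exp (\<beta>*z - z^2/2)"
      using z sqa less_imp_le[OF hh_pos] hh_bound[of z] by (intro mult_mono) auto
    moreover have "exp (z/sqrt a) * exp (\<beta>*z - z^2/2) = exp ((\<beta> + 1/sqrt a) * z - z\<^sup>2 / 2)"
      by (simp add: exp_add[symmetric] algebra_simps)
    ultimately show "norm (kk z) \<le> norm (sqrt a * exp ((\<beta> + 1/sqrt a) * z - z\<^sup>2 / 2))"
      unfolding kk_def using sqa by simp
  qed
qed auto

definition "hdv z = (\<beta> + sqrt a * (1 - exp (z/sqrt a))) * hh z"

lemma hdv_eq: "hdv z = \<beta> * hh z - kk z" unfolding hdv_def kk_def by (simp add: algebra_simps)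

lemma hdv_deriv: "(hh has_real_derivative hdv z) (at z)"
proof -
  have e: "a / sqrt a = sqrt a" using sqa by (metis real_div_sqrt a less_imp_le)
  show ?thesis
    unfolding hh_def[abs_def] hdv_def using sqa e
    by (auto intro!: derivative_eq_intros simp: algebra_simps)
qed

lemma hdv_int: "set_integrable lborel {0<..} hdv"
  unfolding hdv_eq[abs_def] by (intro set_integral_diff set_integrable_mult_right hh_int kk_int)

lemma hdv_integral: "(LBINT z:{0<..}. hdv z) = -1"
proof -
  have "(LBINT z=ereal 0..\<infinity>. hdv z) = 0 - 1"
  proof (rule interval_integral_FTC_integrable[where F=hh])
    show "ereal 0 < \<infinity>" by simp
    show "(hh has_vector_derivative hdv x) (at x)" for x
      using hdv_deriv by (simp add: has_real_derivative_iff_has_vector_derivative)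
    show "isCont hdv x" for x unfolding hdv_def hh_def by (intro continuous_intros) (use sqa in auto)
    show "set_integrable lborel (einterval (ereal 0) \<infinity>) hdv" using hdv_int by simp
    have "(hh \<longlongrightarrow> hh 0) (at_right 0)"
      using hh_cont[of UNIV] by (intro tendsto_within_subset[OF isCont_def[THEN iffD1]]) (auto simp: continuous_on_eq_continuous_at)
    moreover have "hh 0 = 1" unfolding hh_def by simp
    ultimately show "((hh \<circ> real_of_ereal) \<longlongrightarrow> 1) (at_right (ereal 0))"
      by (simp add: ereal_tendsto_simps)
    have "((\<lambda>z. exp (\<beta>*z - z^2/2)) \<longlongrightarrow> 0) at_top" by real_asymp
    then have "(hh \<longlongrightarrow> 0) at_top"
    proof (rule tendsto_sandwich[rotated 3])
      show "\<forall>\<^sub>F z in at_top. 0 \<le> hh z" by (simp add: less_imp_le[OF hh_pos])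
      show "\<forall>\<^sub>F z in at_top. hh z \<le> exp (\<beta>*z - z^2/2)"
        using eventually_ge_at_top[of 0] by eventually_elim (rule hh_bound)
    qed auto
    then show "((hh \<circ> real_of_ereal) \<longlongrightarrow> 0) (at_left \<infinity>)"
      by (simp add: ereal_tendsto_simps)
  qed
  then show ?thesis by (simp add: interval_integral_to_infinity_eq)
qed

definition "orig t = (1 + t) powr (a + \<beta> * sqrt a) * (a * t / (1 + t)) * exp (- a * t)"

lemma fg_eq: "orig (exp (z/sqrt a) - 1) * (exp (z/sqrt a) / sqrt a) = kk z"
proof -
  define w where "w = z / sqrt a"
  have e: "a / sqrt a = sqrt a" using sqa by (metis real_div_sqrt a less_imp_le)
  have sw: "(a + \<beta> * sqrt a) * w = a * w + \<beta> * z" using sqa unfolding w_def by (simp add: field_simps)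
  have p: "exp w powr (a + \<beta> * sqrt a) = exp (a * w + \<beta> * z)"
    by (simp add: powr_def sw[symmetric] mult.commute)
  have "orig (exp w - 1) * (exp w / sqrt a)
      = (a / sqrt a) * (exp w - 1) * (exp (a * w + \<beta> * z) * exp (- a * (exp w - 1)))"
    unfolding orig_def p[symmetric] using sqa by (simp add: field_simps)
  also have "exp (a * w + \<beta> * z) * exp (- a * (exp w - 1)) = exp (\<beta>*z + a*(1 + w - exp w))"
    by (simp add: exp_add[symmetric] algebra_simps)
  finally show ?thesis unfolding kk_def hh_def w_def[symmetric] e by simp
qed

lemma orig_eq: "(LBINT t:{0<..}. orig t) = (LBINT z:{0<..}. kk z)"
proof -
  have "(LBINT t=ereal 0..\<infinity>. orig t) = (LBINT z=ereal 0..\<infinity>. orig (exp (z/sqrt a) - 1) * (exp (z/sqrt a) / sqrt a))"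
  proof (rule interval_integral_substitution_nonneg(2))
    show "ereal 0 < \<infinity>" by simp
    show "DERIV (\<lambda>z. exp (z/sqrt a) - 1) x :> exp (x/sqrt a) / sqrt a" for x
    proof -
      have "DERIV (\<lambda>z. exp (z/sqrt a) - 1) x :> exp (x/sqrt a) * (1/sqrt a) - 0"
        by (intro derivative_intros) (rule DERIV_cdivide[OF DERIV_ident])
      then show ?thesis by simp
    qed
    show "isCont orig (exp (x/sqrt a) - 1)" if "ereal 0 < ereal x" "ereal x < \<infinity>" for x
    proof -
      have "exp (x/sqrt a) - 1 > 0" using that sqa by simp
      then show ?thesis unfolding orig_def[abs_def]
        by (intro continuous_intros) auto
    qed
    show "isCont (\<lambda>x. exp (x/sqrt a) / sqrt a) x" for x by (intro continuous_intros) (use sqa in auto)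
    show "0 \<le> orig (exp (x/sqrt a) - 1)" if "ereal 0 < ereal x" "ereal x < \<infinity>" for x
    proof -
      have "exp (x/sqrt a) - 1 > 0" using that sqa by simp
      then show ?thesis unfolding orig_def using a by (intro mult_nonneg_nonneg divide_nonneg_nonneg) auto
    qed
    show "0 \<le> exp (x/sqrt a) / sqrt a" for x using sqa by simp
    have "((\<lambda>z. exp (z/sqrt a) - 1) \<longlongrightarrow> exp (0/sqrt a) - 1) (at_right 0)"
      using sqa by (intro tendsto_intros) auto
    then show "((ereal \<circ> (\<lambda>z. exp (z/sqrt a) - 1) \<circ> real_of_ereal) \<longlongrightarrow> ereal 0) (at_right (ereal 0))"
      by (simp add: ereal_tendsto_simps)
    have "filterlim (\<lambda>z. exp (z/sqrt a) - 1) at_top at_top" using sqa by real_asymp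
    then show "((ereal \<circ> (\<lambda>z. exp (z/sqrt a) - 1) \<circ> real_of_ereal) \<longlongrightarrow> \<infinity>) (at_left \<infinity>)"
      by (simp add: ereal_tendsto_simps)
    show "set_integrable lborel (einterval (ereal 0) \<infinity>) (\<lambda>x. orig (exp (x/sqrt a) - 1) * (exp (x/sqrt a) / sqrt a))"
      using kk_int by (simp only: einterval_eq_Ici fg_eq)
  qed
  then show ?thesis by (simp only: interval_integral_to_infinity_eq fg_eq)
qed

lemma main_identity: "(LBINT t:{0<..}. orig t) = 1 + \<beta> * (LBINT z:{0<..}. hh z)"
proof -
  have "(LBINT z:{0<..}. kk z) = (LBINT z:{0<..}. \<beta> * hh z - hdv z)"
    by (rule set_lebesgue_integral_cong) (auto simp: hdv_eq)
  also have "\<dots> = \<beta> * (LBINT z:{0<..}. hh z) - (LBINT z:{0<..}. hdv z)"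
    using hh_int hdv_int by (simp add: set_integral_diff set_integral_mult_right set_integrable_mult_right)
  finally show ?thesis using orig_eq hdv_integral by simp
qed

end


lemma J_strict:
  assumes a: "0 < a" "a < b" and bt: "\<beta> > 0"
  shows "(LBINT z:{0<..}. hh a \<beta> z) < (LBINT z:{0<..}. hh b \<beta> z)"
proof -
  have b: "b > 0" using a by simp
  have lt: "hh a \<beta> z < hh b \<beta> z" if "z > 0" for z
    unfolding hh_def[OF a(1) bt] hh_def[OF b bt] using exponent_mono[OF a that] by simp
  define D where "D z = indicator {0<..} z * (hh b \<beta> z - hh a \<beta> z)" for z :: real
  have intD: "integrable lborel D"
    using set_integral_diff(1)[OF hh_int[OF b bt] hh_int[OF a(1) bt]]
    unfolding D_def set_integrable_def by (simp add: algebra_simps)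
  have Dnn: "0 \<le> D z" for z using lt[of z] unfolding D_def by (auto simp: indicator_def less_imp_le)
  have eq: "(LBINT z:{0<..}. hh b \<beta> z) - (LBINT z:{0<..}. hh a \<beta> z) = integral\<^sup>L lborel D"
    using set_integral_diff(2)[OF hh_int[OF b bt] hh_int[OF a(1) bt]]
    unfolding D_def set_lebesgue_integral_def by (simp add: algebra_simps)
  have "integral\<^sup>L lborel D \<noteq> 0"
  proof
    assume "integral\<^sup>L lborel D = 0"
    then have "AE z in lborel. D z = 0"
      using integral_nonneg_eq_0_iff_AE[OF intD] Dnn by auto
    then have "AE z in lborel. (z::real) \<notin> {0<..}"
      by (rule eventually_mono) (use lt in \<open>force simp: D_def indicator_def split: if_splits\<close>)
    then have "emeasure lborel {0::real<..} = 0"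
      by (subst (asm) AE_iff_measurable[where N="{0<..}"]) auto
    moreover have "emeasure lborel {0::real<..1} \<le> emeasure lborel {0::real<..}"
      by (intro emeasure_mono) auto
    ultimately show False by simp
  qed
  moreover have "integral\<^sup>L lborel D \<ge> 0" using Dnn by (intro integral_nonneg_AE) auto
  ultimately show ?thesis using eq by linarith
qed

lemma J_le:
  assumes a: "0 < a" and bt: "\<beta> > 0"
  shows "(LBINT z:{0<..}. hh a \<beta> z) \<le> (LBINT z:{0<..}. exp (\<beta>*z - z^2/2))"
  using hh_int[OF a bt] gauss_set_integrable[of "{0<..}" \<beta>] hh_bound[OF a bt]
  by (intro set_integral_mono) auto

lemma J_nonneg:
  assumes a: "0 < a" and bt: "\<beta> > 0"
  shows "0 \<le> (LBINT z:{0<..}. hh a \<beta> z)"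
  using hh_pos[OF a bt] unfolding set_lebesgue_integral_def
  by (intro integral_nonneg_AE AE_I2) (auto simp: indicator_def less_imp_le)

lemma erlang_eq:
  assumes a: "0 < a" and bt: "\<beta> > 0"
  shows "erlangC (a + \<beta> * sqrt a) a = inverse (1 + \<beta> * (LBINT z:{0<..}. hh a \<beta> z))"
  using main_identity[OF a bt] unfolding erlangC_def orig_def[OF a bt, abs_def] by simp

theorem mainTheorem1:
  fixes \<beta> :: real
  assumes "\<beta> > 0"
  shows "strict_antimono_on {0<..} (\<lambda>a. erlangC (a + \<beta> * sqrt a) a)
         \<and> (\<forall>a>0. erlangC (a + \<beta> * sqrt a) a > C_star \<beta>)"
proof
  show "strict_antimono_on {0<..} (\<lambda>a. erlangC (a + \<beta> * sqrt a) a)"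
    unfolding monotone_on_def
  proof (intro ballI impI)
    fix x y :: real assume xy: "x \<in> {0<..}" "y \<in> {0<..}" "x < y"
    have "1 + \<beta> * (LBINT z:{0<..}. hh x \<beta> z) < 1 + \<beta> * (LBINT z:{0<..}. hh y \<beta> z)"
      using J_strict[of x y \<beta>] xy assms by simp
    moreover have "0 < 1 + \<beta> * (LBINT z:{0<..}. hh x \<beta> z)"
      using J_nonneg[of x \<beta>] xy assms by (simp add: add_pos_nonneg)
    ultimately show "erlangC (y + \<beta> * sqrt y) y < erlangC (x + \<beta> * sqrt x) x"
      using xy assms by (simp add: erlang_eq less_imp_inverse_less)
  qed
  show "\<forall>a>0. erlangC (a + \<beta> * sqrt a) a > C_star \<beta>"
  proof (intro allI impI)
    fix a :: real assume a: "a > 0"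
    have pd: "std_normal_density \<beta> > 0" by (simp add: std_normal_density_def)
    have cs: "C_star \<beta> = inverse (1 + \<beta> * (LBINT z:{0<..}. exp (\<beta>*z - z^2/2)))"
      unfolding C_star_def cdf_eq using pd by simp
    have "1 + \<beta> * (LBINT z:{0<..}. hh a \<beta> z) < 1 + \<beta> * (LBINT z:{0<..}. hh (a+1) \<beta> z)"
      using J_strict[of a "a+1" \<beta>] a assms by simp
    also have "\<dots> \<le> 1 + \<beta> * (LBINT z:{0<..}. exp (\<beta>*z - z^2/2))"
      using J_le[of "a+1" \<beta>] a assms by simp
    finally have lt: "1 + \<beta> * (LBINT z:{0<..}. hh a \<beta> z) < 1 + \<beta> * (LBINT z:{0<..}. exp (\<beta>*z - z^2/2))" .
    moreover have "0 < 1 + \<beta> * (LBINT z:{0<..}. hh a \<beta> z)"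
      using J_nonneg[of a \<beta>] a assms by (simp add: add_pos_nonneg)
    ultimately show "erlangC (a + \<beta> * sqrt a) a > C_star \<beta>"
      using a assms by (simp add: erlang_eq cs less_imp_inverse_less)
  qed
qed

end
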